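(* Let $G_{P,\mathcal{K}'}$ be the closure under R1–R4 of a pattern $P$ with consistent background knowledge $\mathcal{K}'$. Suppose $a_m - b$ is undirected in $G_{P,\mathcal{K}'}$ for $m=1,\dots,M$, and some consistent DAG extension of $G_{P,\mathcal{K}'}$ contains $a_m\to b$ for all $m\le M$. Orient $a_m\to b$ for all $m\le M$ and then close the orientations under R1–R4. Then for every edge $a'\to b'$ oriented during this closure, $b'$ is a descendant of $b$ in the resulting PDAG.
   Context: A PDAG is a graph with directed and undirected edges and no directed cycle. The pattern of a DAG is the graph with the same skeleton in which an edge is directed iff it belongs to a v-structure (a triple $a\to c\leftarrow b$ with $a,b$ non-adjacent). A consistent DAG extension of a PDAG $G$ is a DAG with the same skeleton, the same orientation of every directed edge of $G$, and no v-structures other than those of $G$. A set $\mathcal{K}$ of orientations of undirected edges of $P$ is consistent background knowledge if some DAG with pattern $P$ contains all of them. $G_{P,\mathcal{K}}$ is obtained from $P$ by orienting the edges in $\mathcal{K}$ and then repeatedly applying until none applies: R1: if $k\to i$, $i - j$, $k,j$ non-adjacent, orient $i\to j$; R2: if $i\to k\to j$ and $i - j$, orient $i\to j$; R3: if $i - k$, $i - l$, $i - j$, $k\to j$, $l\to j$, $k,l$ non-adjacent, orient $i\to j$; R4: if $i - k$, $i - l$, $i - j$, $k\to l\to j$, $k,j$ non-adjacent, orient $i\to j$. Descendants are taken along directed edges; every node is a descendant of itself. *)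

theory Defs
  imports Main
begin

text \<open>A (partially directed) graph on the finite vertex type 'a is encoded as a relation
  G :: ('a \<times> 'a) set: an undirected edge x - y is represented by both (x,y) and (y,x)
  being in G, a directed edge x \<rightarrow> y by (x,y) in G and (y,x) not in G.\<close>

type_synonym 'a graph = "('a \<times> 'a) set"

definition adj :: "'a graph \<Rightarrow> 'a \<Rightarrow> 'a \<Rightarrow> bool" where
  "adj G x y \<longleftrightarrow> (x, y) \<in> G \<or> (y, x) \<in> G"

definition nonadj :: "'a graph \<Rightarrow> 'a \<Rightarrow> 'a \<Rightarrow> bool" where
  "nonadj G x y \<longleftrightarrow> x \<noteq> y \<and> \<not> adj G x y"

definition dir :: "'a graph \<Rightarrow> 'a \<Rightarrow> 'a \<Rightarrow> bool" where
  "dir G x y \<longleftrightarrow> (x, y) \<in> G \<and> (y, x) \<notin> G"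

definition und :: "'a graph \<Rightarrow> 'a \<Rightarrow> 'a \<Rightarrow> bool" where
  "und G x y \<longleftrightarrow> (x, y) \<in> G \<and> (y, x) \<in> G"

definition dir_edges :: "'a graph \<Rightarrow> 'a graph" where
  "dir_edges G = {(x, y). dir G x y}"

definition descendant :: "'a graph \<Rightarrow> 'a \<Rightarrow> 'a \<Rightarrow> bool" where
  "descendant G x y \<longleftrightarrow> (x, y) \<in> (dir_edges G)\<^sup>*"

text \<open>A DAG: a relation without directed cycles (in particular irreflexive and with no
  pair of opposite edges, so every edge is directed).\<close>
definition is_dag :: "'a graph \<Rightarrow> bool" where
  "is_dag D \<longleftrightarrow> acyclic D"

definition vstructs :: "'a graph \<Rightarrow> ('a \<times> 'a \<times> 'a) set" where
  "vstructs G = {(x, z, y). dir G x z \<and> dir G y z \<and> nonadj G x y}"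

definition in_vstruct :: "'a graph \<Rightarrow> 'a \<Rightarrow> 'a \<Rightarrow> bool" where
  "in_vstruct G x z \<longleftrightarrow> (\<exists>y. (x, z, y) \<in> vstructs G \<or> (y, z, x) \<in> vstructs G)"

text \<open>Pattern of a DAG: same skeleton, edge directed iff it belongs to a v-structure.\<close>
definition pattern :: "'a graph \<Rightarrow> 'a graph" where
  "pattern D = D \<union> {(y, x). (x, y) \<in> D \<and> \<not> in_vstruct D x y}"

definition is_pattern :: "'a graph \<Rightarrow> bool" where
  "is_pattern P \<longleftrightarrow> (\<exists>D. is_dag D \<and> P = pattern D)"

definition consistent_ext :: "'a graph \<Rightarrow> 'a graph \<Rightarrow> bool" where
  "consistent_ext G D \<longleftrightarrow> is_dag D \<and> (\<forall>x y. adj D x y \<longleftrightarrow> adj G x y)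
     \<and> (\<forall>x y. dir G x y \<longrightarrow> (x, y) \<in> D) \<and> vstructs D \<subseteq> vstructs G"

text \<open>Consistent background knowledge: a set of orientations (x,y) (meaning x \<rightarrow> y) of
  undirected edges of P, all contained in some DAG whose pattern is P.\<close>
definition consistent_bk :: "'a graph \<Rightarrow> 'a graph \<Rightarrow> bool" where
  "consistent_bk P K \<longleftrightarrow> (\<forall>(x, y) \<in> K. und P x y)
     \<and> (\<exists>D. is_dag D \<and> pattern D = P \<and> K \<subseteq> D)"

definition orient :: "'a graph \<Rightarrow> 'a graph \<Rightarrow> 'a graph" where
  "orient G K = G - {(y, x). (x, y) \<in> K}"

definition R1 :: "'a graph \<Rightarrow> 'a \<Rightarrow> 'a \<Rightarrow> bool" where
  "R1 G i j \<longleftrightarrow> (\<exists>k. dir G k i \<and> und G i j \<and> nonadj G k j)"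

definition R2 :: "'a graph \<Rightarrow> 'a \<Rightarrow> 'a \<Rightarrow> bool" where
  "R2 G i j \<longleftrightarrow> (\<exists>k. dir G i k \<and> dir G k j \<and> und G i j)"

definition R3 :: "'a graph \<Rightarrow> 'a \<Rightarrow> 'a \<Rightarrow> bool" where
  "R3 G i j \<longleftrightarrow> (\<exists>k l. und G i k \<and> und G i l \<and> und G i j \<and> dir G k j \<and> dir G l j
                      \<and> nonadj G k l)"

definition R4 :: "'a graph \<Rightarrow> 'a \<Rightarrow> 'a \<Rightarrow> bool" where
  "R4 G i j \<longleftrightarrow> (\<exists>k l. und G i k \<and> und G i l \<and> und G i j \<and> dir G k l \<and> dir G l j
                      \<and> nonadj G k j)"

definition meek_step :: "'a graph \<Rightarrow> 'a graph \<Rightarrow> bool" where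
  "meek_step G G' \<longleftrightarrow> (\<exists>i j. (R1 G i j \<or> R2 G i j \<or> R3 G i j \<or> R4 G i j)
                              \<and> G' = G - {(j, i)})"

definition meek_closure :: "'a graph \<Rightarrow> 'a graph \<Rightarrow> bool" where
  "meek_closure G G' \<longleftrightarrow> meek_step\<^sup>*\<^sup>* G G' \<and> \<not> (\<exists>G''. meek_step G' G'')"

end

theory Submission
  imports Defs
begin
lemma dir_mono: "und G i j \<Longrightarrow> dir G x y \<Longrightarrow> dir (G - {(j,i)}) x y"
  by (auto simp: dir_def und_def)

lemma desc_mono: assumes "und G i j" "descendant G u v"
  shows "descendant (G - {(j,i)}) u v"
proof -
  have "dir_edges G \<subseteq> dir_edges (G - {(j,i)})"
    using dir_mono[OF assms(1)] by (auto simp: dir_edges_def)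
  then show ?thesis using assms(2) unfolding descendant_def using rtrancl_mono by blast
qed

lemma desc_step: "descendant G u v \<Longrightarrow> dir G v w \<Longrightarrow> descendant G u w"
  unfolding descendant_def dir_edges_def by (auto intro: rtrancl_into_rtrancl)

lemma inv_step:
  assumes closed: "\<not>(\<exists>G''. meek_step G1 G'')"
    and sub: "G \<subseteq> G1" and adjeq: "\<forall>x y. x\<noteq>y \<longrightarrow> (adj G x y \<longleftrightarrow> adj G1 x y)"
    and inv: "\<forall>x y. dir G x y \<and> \<not>dir G1 x y \<longrightarrow> descendant G b y"
    and step: "meek_step G G'" and irr: "\<forall>x. (x,x) \<notin> G1"
  shows "G' \<subseteq> G1 \<and> (\<forall>x y. x\<noteq>y \<longrightarrow> (adj G' x y \<longleftrightarrow> adj G1 x y))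
         \<and> (\<forall>x y. dir G' x y \<and> \<not>dir G1 x y \<longrightarrow> descendant G' b y)"
proof -
  obtain i j where rule: "R1 G i j \<or> R2 G i j \<or> R3 G i j \<or> R4 G i j" and G': "G' = G - {(j,i)}"
    using step unfolding meek_step_def by blast
  have uij: "und G i j" using rule unfolding R1_def R2_def R3_def R4_def by blast
  have U: "\<And>x y. und G x y \<Longrightarrow> und G1 x y" using sub unfolding und_def by blast
  have N: "\<And>x y. nonadj G x y \<Longrightarrow> nonadj G1 x y" using adjeq unfolding nonadj_def by blast
  have I: "\<And>x y. dir G x y \<Longrightarrow> \<not> dir G1 x y \<Longrightarrow> descendant G b y" using inv by blast
  have F: "\<not> (R1 G1 i j \<or> R2 G1 i j \<or> R3 G1 i j \<or> R4 G1 i j)"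
    using closed unfolding meek_step_def by blast
  have key: "descendant G b i \<or> descendant G b j"
    using rule
  proof (elim disjE)
    assume "R1 G i j"
    then obtain k where k: "dir G k i" "und G i j" "nonadj G k j" unfolding R1_def by blast
    show ?thesis
    proof (cases "dir G1 k i")
      case True then have "R1 G1 i j" unfolding R1_def using U[OF k(2)] N[OF k(3)] by blast
      then show ?thesis using F by blast
    next
      case False then have "descendant G b i" by (rule I[OF k(1)])
      then show ?thesis by (rule disjI1)
    qed
  next
    assume "R2 G i j"
    then obtain k where k: "dir G i k" "dir G k j" "und G i j" unfolding R2_def by blast
    show ?thesis
    proof (cases "dir G1 k j")
      case False
      then have "descendant G b j" by (rule I[OF k(2)])
      then show ?thesis by (rule disjI2)
    next
      case True
      show ?thesis
      proof (cases "dir G1 i k")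
        case False
        then have "descendant G b k" by (rule I[OF k(1)])
        then have "descendant G b j" by (rule desc_step[OF _ k(2)])
        then show ?thesis by (rule disjI2)
      next
        case True2: True
        have "R2 G1 i j" unfolding R2_def using True True2 U[OF k(3)] by blast
        then show ?thesis using F by blast
      qed
    qed
  next
    assume "R3 G i j"
    then obtain k l where k: "und G i k" "und G i l" "und G i j" "dir G k j" "dir G l j"
      "nonadj G k l" unfolding R3_def by blast
    show ?thesis
    proof (cases "dir G1 k j \<and> dir G1 l j")
      case True
      have "und G1 i k" "und G1 i l" "und G1 i j" "nonadj G1 k l"
        using U[OF k(1)] U[OF k(2)] U[OF k(3)] N[OF k(6)] by -
      then have "R3 G1 i j" unfolding R3_def using True by blast
      then show ?thesis using F by blast
    next
      case False then have "descendant G b j" using I k(4,5) by blast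
      then show ?thesis by (rule disjI2)
    qed
  next
    assume "R4 G i j"
    then obtain k l where k: "und G i k" "und G i l" "und G i j" "dir G k l" "dir G l j"
      "nonadj G k j" unfolding R4_def by blast
    show ?thesis
    proof (cases "dir G1 k l \<and> dir G1 l j")
      case True
      have "und G1 i k" "und G1 i l" "und G1 i j" "nonadj G1 k j"
        using U[OF k(1)] U[OF k(2)] U[OF k(3)] N[OF k(6)] by -
      then have "R4 G1 i j" unfolding R4_def using True by blast
      then show ?thesis using F by blast
    next
      case False
      show ?thesis
      proof (cases "dir G1 l j")
        case True
        then have "\<not> dir G1 k l" using False by blast
        then have "descendant G b l" by (rule I[OF k(4)])
        then have "descendant G b j" by (rule desc_step[OF _ k(5)])
        then show ?thesis by (rule disjI2)
      next
        case False
        then have "descendant G b j" by (rule I[OF k(5)])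
        then show ?thesis by (rule disjI2)
      qed
    qed
  qed
  have "i \<noteq> j" using uij sub irr unfolding und_def by blast
  then have dij: "dir G' i j" using uij G' unfolding dir_def und_def by blast
  have dj: "descendant G' b j"
  proof -
    from key have "descendant G' b i \<or> descendant G' b j"
      using desc_mono[OF uij] G' by blast
    then show ?thesis using desc_step[OF _ dij] by blast
  qed
  have A1: "G' \<subseteq> G1" using G' sub by blast
  have A2: "\<forall>x y. x\<noteq>y \<longrightarrow> (adj G' x y \<longleftrightarrow> adj G1 x y)"
    using adjeq uij G' unfolding adj_def und_def by blast
  have A3: "\<forall>x y. dir G' x y \<and> \<not>dir G1 x y \<longrightarrow> descendant G' b y"
  proof (intro allI impI)
    fix x y assume h: "dir G' x y \<and> \<not>dir G1 x y"
    show "descendant G' b y"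
    proof (cases "(x,y) = (i,j)")
      case True then show ?thesis using dj by simp
    next
      case False
      then have "dir G x y" using h G' unfolding dir_def by blast
      then have "descendant G b y" using I h by blast
      then show ?thesis using desc_mono[OF uij] G' by blast
    qed
  qed
  show ?thesis using A1 A2 A3 by blast
qed
lemma step_sub: "meek_step\<^sup>*\<^sup>* G G' \<Longrightarrow> G' \<subseteq> G"
  by (induction rule: rtranclp_induct) (auto simp: meek_step_def)

lemma pattern_irr: assumes "is_pattern P" shows "\<forall>x. (x,x) \<notin> P"
proof -
  obtain D where D: "acyclic D" "P = pattern D" using assms unfolding is_pattern_def is_dag_def by blast
  have "\<forall>x. (x,x) \<notin> D" using D(1) unfolding acyclic_def by blast
  then show ?thesis using D(2) unfolding pattern_def by blast
qed

theorem mainTheorem16: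
  fixes P K G1 G2 :: "('v::finite \<times> 'v) set"
    and a :: "nat \<Rightarrow> 'v" and b :: 'v and M :: nat
  assumes "is_pattern P"
    and "consistent_bk P K"
    and "meek_closure (orient P K) G1"
    and "\<forall>m\<in>{1..M}. und G1 (a m) b"
    and "\<exists>D. consistent_ext G1 D \<and> (\<forall>m\<in>{1..M}. (a m, b) \<in> D)"
    and "meek_closure (orient G1 {(a m, b) | m. m \<in> {1..M}}) G2"
  shows "\<forall>x y. und (orient G1 {(a m, b) | m. m \<in> {1..M}}) x y \<and> dir G2 x y
                \<longrightarrow> descendant G2 b y"
proof -
  let ?A = "{(a m, b) | m. m \<in> {1..M}}"
  let ?G0 = "orient G1 ?A"
  have closed: "\<not>(\<exists>G''. meek_step G1 G'')" using assms(3) unfolding meek_closure_def by blast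
  have rt: "meek_step\<^sup>*\<^sup>* ?G0 G2" using assms(6) unfolding meek_closure_def by blast
  have irrP: "\<forall>x. (x,x) \<notin> P" by (rule pattern_irr[OF assms(1)])
  have "G1 \<subseteq> orient P K" using assms(3) step_sub unfolding meek_closure_def by blast
  then have irr: "\<forall>x. (x,x) \<notin> G1" using irrP unfolding orient_def by blast
  have S0: "?G0 \<subseteq> G1" unfolding orient_def by blast
  have A0: "\<forall>x y. x\<noteq>y \<longrightarrow> (adj ?G0 x y \<longleftrightarrow> adj G1 x y)"
  proof (intro allI impI)
    fix x y :: 'v assume xy: "x \<noteq> y"
    show "adj ?G0 x y \<longleftrightarrow> adj G1 x y"
    proof
      assume "adj ?G0 x y" then show "adj G1 x y" using S0 unfolding adj_def by blast
    next
      assume h: "adj G1 x y"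
      show "adj ?G0 x y"
      proof (cases "(x,y) \<in> ?G0 \<or> (y,x) \<in> ?G0")
        case True then show ?thesis unfolding adj_def by blast
      next
        case False
        then have "(x,y) \<notin> ?G0" "(y,x) \<notin> ?G0" by blast+
        then have "(x,y) \<notin> G1 \<or> (y,x) \<in> ?A" "(y,x) \<notin> G1 \<or> (x,y) \<in> ?A"
          unfolding orient_def by blast+
        moreover have "(y,x) \<in> ?A \<Longrightarrow> (x,y) \<in> ?A \<Longrightarrow> False" using xy by auto
        moreover have "(y,x) \<in> ?A \<Longrightarrow> (x,y) \<in> G1 \<and> (y,x) \<in> G1"
        proof -
          assume "(y,x) \<in> ?A"
          then obtain m where "m \<in> {1..M}" "y = a m" "x = b" by blast
          then show "(x,y) \<in> G1 \<and> (y,x) \<in> G1" using assms(4) unfolding und_def by blast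
        qed
        moreover have "(x,y) \<in> ?A \<Longrightarrow> (y,x) \<in> G1 \<and> (x,y) \<in> G1"
        proof -
          assume "(x,y) \<in> ?A"
          then obtain m where "m \<in> {1..M}" "x = a m" "y = b" by blast
          then show "(y,x) \<in> G1 \<and> (x,y) \<in> G1" using assms(4) unfolding und_def by blast
        qed
        ultimately have False using h unfolding adj_def by blast
        then show ?thesis ..
      qed
    qed
  qed
  have I0: "\<forall>x y. dir ?G0 x y \<and> \<not>dir G1 x y \<longrightarrow> descendant ?G0 b y"
  proof (intro allI impI)
    fix x y assume h: "dir ?G0 x y \<and> \<not>dir G1 x y"
    then have "(y,x) \<in> G1" "(y,x) \<notin> ?G0" using S0 unfolding dir_def by blast+
    then have "(x,y) \<in> ?A" unfolding orient_def by blast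
    then have "y = b" by blast
    then show "descendant ?G0 b y" unfolding descendant_def by simp
  qed
  have "G2 \<subseteq> G1 \<and> (\<forall>x y. x\<noteq>y \<longrightarrow> (adj G2 x y \<longleftrightarrow> adj G1 x y))
         \<and> (\<forall>x y. dir G2 x y \<and> \<not>dir G1 x y \<longrightarrow> descendant G2 b y)"
    using rt
  proof (induction rule: rtranclp_induct)
    case base then show ?case using S0 A0 I0 by (intro conjI)
  next
    case (step y z)
    have "y \<subseteq> G1" "\<forall>x ya. x \<noteq> ya \<longrightarrow> adj y x ya = adj G1 x ya"
      "\<forall>x ya. dir y x ya \<and> \<not> dir G1 x ya \<longrightarrow> descendant y b ya" using step.IH by blast+
    from inv_step[OF closed this step.hyps(2) irr] show ?case .
  qed
  then have inv: "\<forall>x y. dir G2 x y \<and> \<not>dir G1 x y \<longrightarrow> descendant G2 b y" by blast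
  show ?thesis
  proof (intro allI impI)
    fix x y assume h: "und ?G0 x y \<and> dir G2 x y"
    then have "\<not> dir G1 x y" using S0 unfolding und_def dir_def by blast
    then show "descendant G2 b y" using inv h by blast
  qed
qed
end
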